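(* Let $p\ge1$, let $\mu\in\mathscr P_p(\mathbb R)$ be atomless and $\varepsilon\in(0,1/2)$. Then for every $q\in[1,p]$, $$\operatorname{diam}(I_\varepsilon[\mu])^{p-q}\,\mathbb W_q(\mu,\mathcal C_\varepsilon\mu)^q\le C\int_{I_\varepsilon[\mu]^c}|x-x_\mu|^p\,d\mu(x),$$ for a constant $C>0$ depending only on $p$, where $x_\mu:=X_\mu(1/2)$ is the median of $\mu$. If $q=p$ one can take $C=1$.
   Context: For $\mu\in\mathscr P(\mathbb R)$ the quantile function is $X_\mu(z)=\inf\{a\in\mathbb R:\mu(-\infty,a)>z\}$, $z\in(0,1)$. For $\varepsilon\in(0,1/2)$, $I_\varepsilon[\mu]=[X_\mu(\varepsilon),X_\mu(1-\varepsilon)]$ and, for a measure $\nu$, $\mathcal C_\varepsilon(\nu|\mu)=\frac1{1-2\varepsilon}\,\nu\llcorner I_\varepsilon[\mu]$; $\mathcal C_\varepsilon\mu:=\mathcal C_\varepsilon(\mu|\mu)$. $\mathbb W_q$ is the $q$-Wasserstein distance. *)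

theory Defs
  imports "HOL-Probability.Probability"
begin

definition quantile :: "real measure \<Rightarrow> real \<Rightarrow> real" where
  "quantile \<mu> z = Inf {a. measure \<mu> {..<a} > z}"

definition Ieps :: "real measure \<Rightarrow> real \<Rightarrow> real set" where
  "Ieps \<mu> \<epsilon> = {quantile \<mu> \<epsilon> .. quantile \<mu> (1 - \<epsilon>)}"

definition trim_cond :: "real \<Rightarrow> real measure \<Rightarrow> real measure \<Rightarrow> real measure" where
  "trim_cond \<epsilon> \<nu> \<mu> = density \<nu> (\<lambda>x. ennreal (indicator (Ieps \<mu> \<epsilon>) x / (1 - 2 * \<epsilon>)))"

definition trim :: "real \<Rightarrow> real measure \<Rightarrow> real measure" where
  "trim \<epsilon> \<mu> = trim_cond \<epsilon> \<mu> \<mu>"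

definition Pp :: "real \<Rightarrow> real measure set" where
  "Pp p = {\<mu>. prob_space \<mu> \<and> sets \<mu> = sets borel \<and> integrable \<mu> (\<lambda>x. \<bar>x\<bar> powr p)}"

definition atomless :: "real measure \<Rightarrow> bool" where
  "atomless \<mu> \<longleftrightarrow> (\<forall>x. emeasure \<mu> {x} = 0)"

definition couplings :: "real measure \<Rightarrow> real measure \<Rightarrow> (real \<times> real) measure set" where
  "couplings \<mu> \<nu> = {\<pi>. prob_space \<pi> \<and> sets \<pi> = sets (borel \<Otimes>\<^sub>M borel) \<and>
      distr \<pi> borel fst = \<mu> \<and> distr \<pi> borel snd = \<nu>}"

definition wass_cost :: "real \<Rightarrow> real measure \<Rightarrow> real measure \<Rightarrow> ennreal" where
  "wass_cost q \<mu> \<nu> = (INF \<pi>\<in>couplings \<mu> \<nu>. \<integral>\<^sup>+ z. ennreal (\<bar>fst z - snd z\<bar> powr q) \<partial>\<pi>)"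

definition Wasserstein :: "real \<Rightarrow> real measure \<Rightarrow> real measure \<Rightarrow> real" where
  "Wasserstein q \<mu> \<nu> = enn2real (wass_cost q \<mu> \<nu>) powr (1 / q)"

text \<open>Real power with the convention x^0 = 1 (also for x = 0), unlike powr.\<close>
definition rpow :: "real \<Rightarrow> real \<Rightarrow> real" where
  "rpow x a = (if a = 0 then 1 else x powr a)"

end

theory Submission imports Defs begin

lemma (in real_distribution) quantile_cdf:
  assumes atl: "\<And>x. measure M {x} = 0" and z: "0 < z" "z < 1"
  shows "measure M {..< quantile M z} = z"
proof -
  have lt_eq: "measure M {..<t} = cdf M t" for t
  proof -
    have "{..t} = {..<t} \<union> {t}" by auto
    then have "cdf M t = measure M {..<t} + measure M {t}"
      unfolding cdf_def using finite_measure_Union[of "{..<t}" "{t}"] by (simp add: Un_commute)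
    then show ?thesis using atl by simp
  qed
  have cont: "isCont (cdf M) t" for t using isCont_cdf atl by simp
  define S where "S = {a. cdf M a > z}"
  have Q: "quantile M z = Inf S" unfolding quantile_def S_def lt_eq ..
  obtain N where N: "\<And>n. n \<ge> N \<Longrightarrow> z < cdf M n"
    using order_tendstoD(1)[OF cdf_lim_at_top_prob z(2)] by (auto simp: eventually_at_top_linorder)
  have ne: "S \<noteq> {}" using N[of N] by (auto simp: S_def)
  obtain N' where N': "\<And>n. n \<le> N' \<Longrightarrow> cdf M n < z"
    using order_tendstoD(2)[OF cdf_lim_at_bot z(1)] by (auto simp: eventually_at_bot_linorder)
  have bdd: "bdd_below S"
    unfolding bdd_below_def S_def using N' by (metis linorder_not_le mem_Collect_eq order_less_asym order_less_imp_le)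
  define Qz where "Qz = Inf S"
  have low: "Qz \<le> s" if "s \<in> S" for s using cInf_lower[OF that bdd] Qz_def by simp
  have c1: "\<not> cdf M Qz > z"
  proof
    assume h: "cdf M Qz > z"
    have "eventually (\<lambda>x. z < cdf M x) (at Qz)"
      using order_tendstoD(1)[OF cont[of Qz, unfolded isCont_def] h] .
    then obtain d where d: "d > 0" "\<And>x. x \<noteq> Qz \<Longrightarrow> dist x Qz < d \<Longrightarrow> z < cdf M x"
      by (auto simp: eventually_at)
    have "Qz - d/2 \<in> S" using d by (auto simp: S_def dist_real_def)
    then show False using low d by fastforce
  qed
  have c2: "\<not> cdf M Qz < z"
  proof
    assume h: "cdf M Qz < z"
    have "eventually (\<lambda>x. cdf M x < z) (at Qz)"
      using order_tendstoD(2)[OF cont[of Qz, unfolded isCont_def] h] .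
    then obtain d where d: "d > 0" "\<And>x. x \<noteq> Qz \<Longrightarrow> dist x Qz < d \<Longrightarrow> cdf M x < z"
      by (auto simp: eventually_at)
    have "Qz + d/2 \<le> s" if "s \<in> S" for s
    proof (rule ccontr)
      assume "\<not> Qz + d/2 \<le> s"
      moreover have "Qz \<le> s" using low that .
      moreover have "z < cdf M s" using that by (auto simp: S_def)
      ultimately show False using h d(2)[of s] by (cases "s = Qz") (auto simp: dist_real_def)
    qed
    then have "Qz + d/2 \<le> Qz" unfolding Qz_def by (intro cInf_greatest[OF ne]) auto
    then show False using d by simp
  qed
  show ?thesis using c1 c2 Q lt_eq Qz_def by simp
qed


locale tctx = real_distribution M for M :: "real measure" +
  fixes e :: real
  assumes atl: "\<And>x. measure M {x} = 0" and e0: "0 < e" and e1: "e < 1/2"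
begin

lemma sets_eq[measurable_cong]: "sets M = sets borel" using events_eq_borel .

definition "qa = quantile M e"
definition "qm = quantile M (1/2)"
definition "qb = quantile M (1-e)"
definition "cc = 2 / (1 - 2*e)"
definition "II = {qa..qb}"

lemma Fa: "prob {..<qa} = e" unfolding qa_def using quantile_cdf[OF atl] e0 e1 by simp
lemma Fm: "prob {..<qm} = 1/2" unfolding qm_def using quantile_cdf[OF atl] by simp
lemma Fb: "prob {..<qb} = 1-e" unfolding qb_def using quantile_cdf[OF atl] e0 e1 by simp

lemma am: "qa < qm"
proof (rule ccontr)
  assume "\<not> qa < qm"
  then have "prob {..<qm} \<le> prob {..<qa}" by (intro finite_measure_mono) auto
  then show False using Fa Fm e1 by simp
qed

lemma mb: "qm < qb"
proof (rule ccontr)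
  assume "\<not> qm < qb"
  then have "prob {..<qb} \<le> prob {..<qm}" by (intro finite_measure_mono) auto
  then show False using Fb Fm e1 by simp
qed

lemma prob_Ico: "x \<le> y \<Longrightarrow> prob {x..<y} = prob {..<y} - prob {..<x}"
proof -
  assume "x \<le> y"
  then have "{x..<y} = {..<y} - {..<x}" "{..<x} \<subseteq> {..<y}" by auto
  then show ?thesis using finite_measure_Diff[of "{..<y}" "{..<x}"] by simp
qed

lemma prob_Icc: "x \<le> y \<Longrightarrow> prob {x..y} = prob {..<y} - prob {..<x}"
proof -
  assume "x \<le> y"
  then have "{x..y} = {x..<y} \<union> {y}" by auto
  then have "prob {x..y} = prob {x..<y} + prob {y}"
    using finite_measure_Union[of "{x..<y}" "{y}"] by simp
  then show ?thesis using prob_Ico[OF \<open>x \<le> y\<close>] atl by simp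
qed

lemma prob_Ioc: "x \<le> y \<Longrightarrow> prob {x<..y} = prob {..<y} - prob {..<x}"
proof -
  assume "x \<le> y"
  then have "{x..y} = {x<..y} \<union> {x}" by auto
  then have "prob {x..y} = prob {x<..y} + prob {x}"
    using finite_measure_Union[of "{x<..y}" "{x}"] by simp
  then show ?thesis using prob_Icc[OF \<open>x \<le> y\<close>] atl by simp
qed

lemma prob_Ioi: "prob {x<..} = 1 - prob {..<x}"
proof -
  have "{x<..} = space M - ({..<x} \<union> {x})" by auto
  moreover have "prob ({..<x} \<union> {x}) = prob {..<x}"
    using finite_measure_Union[of "{..<x}" "{x}"] atl by simp
  ultimately show ?thesis using prob_compl[of "{..<x} \<union> {x}"] by simp
qed

lemma E_left: "emeasure M {..<qa} = ennreal e" using Fa by (simp add: emeasure_eq_measure)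
lemma E_right: "emeasure M {qb<..} = ennreal e" using Fb prob_Ioi by (simp add: emeasure_eq_measure)
lemma K1: "ennreal cc * emeasure M {qa..qm} = 1"
proof -
  have "prob {qa..qm} = 1/2 - e" using prob_Icc am Fa Fm by simp
  then have "cc * prob {qa..qm} = 1" unfolding cc_def using e1 by (simp add: field_simps)
  then show ?thesis using e1 by (simp add: emeasure_eq_measure cc_def ennreal_mult[symmetric])
qed
lemma K2: "ennreal cc * emeasure M {qm<..qb} = 1"
proof -
  have "prob {qm<..qb} = 1/2 - e" using prob_Ioc mb Fb Fm by simp
  then have "cc * prob {qm<..qb} = 1" unfolding cc_def using e1 by (simp add: field_simps)
  then show ?thesis using e1 by (simp add: emeasure_eq_measure cc_def ennreal_mult[symmetric])
qed
lemma cc_pos: "cc > 0" unfolding cc_def using e1 by simp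
lemma K3: "1 + ennreal cc * ennreal e = ennreal (1/(1-2*e))"
proof -
  have "1 + cc * e = 1/(1-2*e)" unfolding cc_def using e1 by (simp add: field_simps)
  moreover have "ennreal (1 + cc * e) = 1 + ennreal cc * ennreal e"
    using cc_pos e0 by (simp add: ennreal_plus ennreal_mult)
  ultimately show ?thesis by simp
qed

end


context tctx begin

definition gg :: "real \<times> real \<Rightarrow> ennreal" where
  "gg z = indicator II (fst z) + indicator {..<qa} (fst z) * ennreal cc * indicator {qa..qm} (snd z)
         + indicator {qb<..} (fst z) * ennreal cc * indicator {qm<..qb} (snd z)"

definition TT :: "real \<times> real \<Rightarrow> real \<times> real" where
  "TT z = (fst z, if fst z \<in> II then fst z else snd z)"

definition "PI = distr (density (M \<Otimes>\<^sub>M M) gg) (borel \<Otimes>\<^sub>M borel) TT"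

lemma II_sets[measurable]: "II \<in> sets borel" unfolding II_def by simp

lemma gg_meas[measurable]: "gg \<in> borel_measurable (M \<Otimes>\<^sub>M M)"
  unfolding gg_def II_def by measurable

lemma TT_meas[measurable]: "TT \<in> measurable (M \<Otimes>\<^sub>M M) (borel \<Otimes>\<^sub>M borel)"
  unfolding TT_def II_def by measurable

lemma sets_PI: "sets PI = sets (borel \<Otimes>\<^sub>M borel)" unfolding PI_def by simp

lemma int_PI:
  assumes phi[measurable]: "phi \<in> borel_measurable (borel \<Otimes>\<^sub>M borel)"
  shows "(\<integral>\<^sup>+ z. phi z \<partial>PI) = (\<integral>\<^sup>+ x. indicator II x * phi (x, x)
     + indicator {..<qa} x * ennreal cc * (\<integral>\<^sup>+ y. indicator {qa..qm} y * phi (x, y) \<partial>M)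
     + indicator {qb<..} x * ennreal cc * (\<integral>\<^sup>+ y. indicator {qm<..qb} y * phi (x, y) \<partial>M) \<partial>M)"
proof -
  have TTd: "TT \<in> measurable (density (M \<Otimes>\<^sub>M M) gg) (borel \<Otimes>\<^sub>M borel)" by simp
  have "(\<integral>\<^sup>+ z. phi z \<partial>PI) = (\<integral>\<^sup>+ z. phi (TT z) \<partial>density (M \<Otimes>\<^sub>M M) gg)"
    unfolding PI_def by (rule nn_integral_distr[OF TTd]) simp
  also have "\<dots> = (\<integral>\<^sup>+ z. gg z * phi (TT z) \<partial>(M \<Otimes>\<^sub>M M))"
    by (rule nn_integral_density) measurable
  also have "\<dots> = (\<integral>\<^sup>+ x. \<integral>\<^sup>+ y. gg (x, y) * phi (TT (x, y)) \<partial>M \<partial>M)"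
    by (rule nn_integral_fst[symmetric]) measurable
  also have "\<dots> = (\<integral>\<^sup>+ x. \<integral>\<^sup>+ y. indicator II x * phi (x, x)
     + indicator {..<qa} x * ennreal cc * (indicator {qa..qm} y * phi (x, y))
     + indicator {qb<..} x * ennreal cc * (indicator {qm<..qb} y * phi (x, y)) \<partial>M \<partial>M)"
  proof (intro nn_integral_cong)
    fix x y
    show "gg (x, y) * phi (TT (x, y)) = indicator II x * phi (x, x)
     + indicator {..<qa} x * ennreal cc * (indicator {qa..qm} y * phi (x, y))
     + indicator {qb<..} x * ennreal cc * (indicator {qm<..qb} y * phi (x, y))"
      using am mb unfolding gg_def TT_def II_def
      by (cases "x < qa"; cases "qb < x"; auto simp: indicator_def)
  qed
  also have "\<dots> = (\<integral>\<^sup>+ x. indicator II x * phi (x, x)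
     + indicator {..<qa} x * ennreal cc * (\<integral>\<^sup>+ y. indicator {qa..qm} y * phi (x, y) \<partial>M)
     + indicator {qb<..} x * ennreal cc * (\<integral>\<^sup>+ y. indicator {qm<..qb} y * phi (x, y) \<partial>M) \<partial>M)"
  proof (intro nn_integral_cong)
    fix x
    show "(\<integral>\<^sup>+ y. indicator II x * phi (x, x)
     + indicator {..<qa} x * ennreal cc * (indicator {qa..qm} y * phi (x, y))
     + indicator {qb<..} x * ennreal cc * (indicator {qm<..qb} y * phi (x, y)) \<partial>M) =
      indicator II x * phi (x, x)
     + indicator {..<qa} x * ennreal cc * (\<integral>\<^sup>+ y. indicator {qa..qm} y * phi (x, y) \<partial>M)
     + indicator {qb<..} x * ennreal cc * (\<integral>\<^sup>+ y. indicator {qm<..qb} y * phi (x, y) \<partial>M)"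
      using emeasure_space_1 by (simp add: nn_integral_add nn_integral_cmult)
  qed
  finally show ?thesis .
qed


lemma fst_int:
  assumes f[measurable]: "f \<in> borel_measurable borel"
  shows "(\<integral>\<^sup>+ z. f (fst z) \<partial>PI) = (\<integral>\<^sup>+ x. f x \<partial>M)"
proof -
  have "(\<integral>\<^sup>+ z. f (fst z) \<partial>PI) = (\<integral>\<^sup>+ x. indicator II x * f x
     + indicator {..<qa} x * ennreal cc * (\<integral>\<^sup>+ y. f x * indicator {qa..qm} y \<partial>M)
     + indicator {qb<..} x * ennreal cc * (\<integral>\<^sup>+ y. f x * indicator {qm<..qb} y \<partial>M) \<partial>M)"
    by (subst int_PI) (auto simp: mult.commute)
  also have "\<dots> = (\<integral>\<^sup>+ x. f x \<partial>M)"
  proof (intro nn_integral_cong)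
    fix x
    have "(\<integral>\<^sup>+ y. f x * indicator {qa..qm} y \<partial>M) = f x * emeasure M {qa..qm}"
      by (rule nn_integral_cmult_indicator) simp
    moreover have "(\<integral>\<^sup>+ y. f x * indicator {qm<..qb} y \<partial>M) = f x * emeasure M {qm<..qb}"
      by (rule nn_integral_cmult_indicator) simp
    ultimately show "indicator II x * f x
     + indicator {..<qa} x * ennreal cc * (\<integral>\<^sup>+ y. f x * indicator {qa..qm} y \<partial>M)
     + indicator {qb<..} x * ennreal cc * (\<integral>\<^sup>+ y. f x * indicator {qm<..qb} y \<partial>M) = f x"
      using K1 K2 am mb unfolding II_def
      by (cases "x < qa"; cases "qb < x"; auto simp: indicator_def mult.assoc mult.left_commute[of "ennreal cc"])
  qed
  finally show ?thesis .
qed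

lemma snd_int:
  assumes f[measurable]: "f \<in> borel_measurable borel"
  shows "(\<integral>\<^sup>+ z. f (snd z) \<partial>PI) = ennreal (1/(1-2*e)) * (\<integral>\<^sup>+ x. indicator II x * f x \<partial>M)"
proof -
  define FL where "FL = (\<integral>\<^sup>+ y. indicator {qa..qm} y * f y \<partial>M)"
  define FR where "FR = (\<integral>\<^sup>+ y. indicator {qm<..qb} y * f y \<partial>M)"
  have "(\<integral>\<^sup>+ z. f (snd z) \<partial>PI) = (\<integral>\<^sup>+ x. indicator II x * f x
     + (ennreal cc * FL) * indicator {..<qa} x + (ennreal cc * FR) * indicator {qb<..} x \<partial>M)"
    by (subst int_PI) (simp_all add: FL_def FR_def ac_simps)
  also have "\<dots> = (\<integral>\<^sup>+ x. indicator II x * f x \<partial>M) + ennreal cc * FL * ennreal e + ennreal cc * FR * ennreal e"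
    by (simp add: nn_integral_add nn_integral_cmult_indicator E_left E_right)
  also have "FL + FR = (\<integral>\<^sup>+ x. indicator II x * f x \<partial>M)"
  proof -
    have "FL + FR = (\<integral>\<^sup>+ y. indicator {qa..qm} y * f y + indicator {qm<..qb} y * f y \<partial>M)"
      unfolding FL_def FR_def by (simp add: nn_integral_add)
    also have "\<dots> = (\<integral>\<^sup>+ x. indicator II x * f x \<partial>M)"
      using am mb unfolding II_def
      by (intro nn_integral_cong) (auto simp: indicator_def)
    finally show ?thesis .
  qed
  then have "(\<integral>\<^sup>+ x. indicator II x * f x \<partial>M) + ennreal cc * FL * ennreal e + ennreal cc * FR * ennreal e
      = (1 + ennreal cc * ennreal e) * (\<integral>\<^sup>+ x. indicator II x * f x \<partial>M)"
  proof -
    assume FLR: "FL + FR = (\<integral>\<^sup>+ x. indicator II x * f x \<partial>M)"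
    have "(\<integral>\<^sup>+ x. indicator II x * f x \<partial>M) + ennreal cc * FL * ennreal e + ennreal cc * FR * ennreal e
      = (\<integral>\<^sup>+ x. indicator II x * f x \<partial>M) + ennreal cc * ennreal e * (FL + FR)"
      by (simp add: distrib_left ac_simps)
    also have "\<dots> = (1 + ennreal cc * ennreal e) * (\<integral>\<^sup>+ x. indicator II x * f x \<partial>M)"
      unfolding FLR by (simp add: distrib_right)
    finally show ?thesis .
  qed
  also have "\<dots> = ennreal (1/(1-2*e)) * (\<integral>\<^sup>+ x. indicator II x * f x \<partial>M)" using K3 by simp
  finally show ?thesis .
qed


lemma sets_PI'[measurable_cong]: "sets PI = sets (borel \<Otimes>\<^sub>M borel)" by (rule sets_PI)

lemma trim_eq: "trim e M = density M (\<lambda>x. ennreal (indicator II x / (1 - 2 * e)))"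
  unfolding trim_def trim_cond_def Ieps_def II_def qa_def qb_def ..

lemma marg1: "distr PI borel fst = M"
proof (rule measure_eqI)
  show "sets (distr PI borel fst) = sets M" by simp
  fix A assume "A \<in> sets (distr PI borel fst)"
  then have A[measurable]: "A \<in> sets borel" by simp
  have "emeasure (distr PI borel fst) A = (\<integral>\<^sup>+ x. indicator A x \<partial>distr PI borel fst)"
    by (simp add: nn_integral_indicator)
  also have "\<dots> = (\<integral>\<^sup>+ z. indicator A (fst z) \<partial>PI)"
    by (rule nn_integral_distr) simp_all
  also have "\<dots> = (\<integral>\<^sup>+ x. indicator A x \<partial>M)" by (rule fst_int) simp
  also have "\<dots> = emeasure M A" by (simp add: nn_integral_indicator)
  finally show "emeasure (distr PI borel fst) A = emeasure M A" .
qed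

lemma int_trim:
  assumes f[measurable]: "f \<in> borel_measurable borel"
  shows "(\<integral>\<^sup>+ x. f x \<partial>trim e M) = ennreal (1/(1-2*e)) * (\<integral>\<^sup>+ x. indicator II x * f x \<partial>M)"
proof -
  have "(\<integral>\<^sup>+ x. f x \<partial>trim e M) = (\<integral>\<^sup>+ x. ennreal (indicator II x / (1 - 2 * e)) * f x \<partial>M)"
    unfolding trim_eq by (rule nn_integral_density) simp_all
  also have "\<dots> = (\<integral>\<^sup>+ x. ennreal (1/(1-2*e)) * (indicator II x * f x) \<partial>M)"
    by (intro nn_integral_cong) (simp add: indicator_def)
  also have "\<dots> = ennreal (1/(1-2*e)) * (\<integral>\<^sup>+ x. indicator II x * f x \<partial>M)"
    by (rule nn_integral_cmult) simp
  finally show ?thesis .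
qed

lemma marg2: "distr PI borel snd = trim e M"
proof (rule measure_eqI)
  show "sets (distr PI borel snd) = sets (trim e M)" by (simp add: trim_eq)
  fix A assume "A \<in> sets (distr PI borel snd)"
  then have A[measurable]: "A \<in> sets borel" by simp
  have "emeasure (distr PI borel snd) A = (\<integral>\<^sup>+ x. indicator A x \<partial>distr PI borel snd)"
    by (simp add: nn_integral_indicator)
  also have "\<dots> = (\<integral>\<^sup>+ z. indicator A (snd z) \<partial>PI)"
    by (rule nn_integral_distr) simp_all
  also have "\<dots> = (\<integral>\<^sup>+ x. indicator A x \<partial>trim e M)" by (simp add: snd_int int_trim)
  also have "\<dots> = emeasure (trim e M) A"
    by (rule nn_integral_indicator) (simp add: trim_eq)
  finally show "emeasure (distr PI borel snd) A = emeasure (trim e M) A" .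
qed

lemma PI_coupling: "PI \<in> couplings M (trim e M)"
proof -
  have "emeasure PI (space PI) = emeasure (distr PI borel fst) UNIV"
    by (subst emeasure_distr) (auto simp: space_pair_measure sets_PI PI_def)
  also have "\<dots> = 1" using marg1 emeasure_space_1 by simp
  finally have "prob_space PI" by (rule prob_spaceI)
  then show ?thesis unfolding couplings_def using sets_PI marg1 marg2 by simp
qed


lemma cost_le:
  assumes q: "q \<ge> 0"
  shows "wass_cost q M (trim e M) \<le> (\<integral>\<^sup>+ x. indicator (- II) x * ennreal (\<bar>x - qm\<bar> powr q) \<partial>M)"
proof -
  have "wass_cost q M (trim e M) \<le> (\<integral>\<^sup>+ z. ennreal (\<bar>fst z - snd z\<bar> powr q) \<partial>PI)"
    unfolding wass_cost_def by (rule INF_lower[OF PI_coupling])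
  also have "\<dots> = (\<integral>\<^sup>+ x. indicator II x * ennreal (\<bar>x - x\<bar> powr q)
     + indicator {..<qa} x * ennreal cc * (\<integral>\<^sup>+ y. indicator {qa..qm} y * ennreal (\<bar>x - y\<bar> powr q) \<partial>M)
     + indicator {qb<..} x * ennreal cc * (\<integral>\<^sup>+ y. indicator {qm<..qb} y * ennreal (\<bar>x - y\<bar> powr q) \<partial>M) \<partial>M)"
    by (subst int_PI) simp_all
  also have "\<dots> \<le> (\<integral>\<^sup>+ x. indicator (- II) x * ennreal (\<bar>x - qm\<bar> powr q) \<partial>M)"
  proof (intro nn_integral_mono)
    fix x
    have L: "(\<integral>\<^sup>+ y. indicator {qa..qm} y * ennreal (\<bar>x - y\<bar> powr q) \<partial>M)
        \<le> (\<integral>\<^sup>+ y. ennreal (\<bar>x - qm\<bar> powr q) * indicator {qa..qm} y \<partial>M)" if "x < qa"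
    proof (intro nn_integral_mono)
      fix y
      show "indicator {qa..qm} y * ennreal (\<bar>x - y\<bar> powr q) \<le> ennreal (\<bar>x - qm\<bar> powr q) * indicator {qa..qm} y"
      proof (cases "y \<in> {qa..qm}")
        case True
        then have "\<bar>x - y\<bar> powr q \<le> \<bar>x - qm\<bar> powr q" using that q by (intro powr_mono2) auto
        then show ?thesis using True by simp
      qed simp
    qed
    have R: "(\<integral>\<^sup>+ y. indicator {qm<..qb} y * ennreal (\<bar>x - y\<bar> powr q) \<partial>M)
        \<le> (\<integral>\<^sup>+ y. ennreal (\<bar>x - qm\<bar> powr q) * indicator {qm<..qb} y \<partial>M)" if "qb < x"
    proof (intro nn_integral_mono)
      fix y
      show "indicator {qm<..qb} y * ennreal (\<bar>x - y\<bar> powr q) \<le> ennreal (\<bar>x - qm\<bar> powr q) * indicator {qm<..qb} y"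
      proof (cases "y \<in> {qm<..qb}")
        case True
        then have "\<bar>x - y\<bar> powr q \<le> \<bar>x - qm\<bar> powr q" using that q by (intro powr_mono2) auto
        then show ?thesis using True by simp
      qed simp
    qed
    have L2: "ennreal cc * (\<integral>\<^sup>+ y. ennreal (\<bar>x - qm\<bar> powr q) * indicator {qa..qm} y \<partial>M) = ennreal (\<bar>x - qm\<bar> powr q)"
      by (simp add: nn_integral_cmult_indicator mult.left_commute[of "ennreal cc"] K1)
    have R2: "ennreal cc * (\<integral>\<^sup>+ y. ennreal (\<bar>x - qm\<bar> powr q) * indicator {qm<..qb} y \<partial>M) = ennreal (\<bar>x - qm\<bar> powr q)"
      by (simp add: nn_integral_cmult_indicator mult.left_commute[of "ennreal cc"] K2)
    show "indicator II x * ennreal (\<bar>x - x\<bar> powr q)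
     + indicator {..<qa} x * ennreal cc * (\<integral>\<^sup>+ y. indicator {qa..qm} y * ennreal (\<bar>x - y\<bar> powr q) \<partial>M)
     + indicator {qb<..} x * ennreal cc * (\<integral>\<^sup>+ y. indicator {qm<..qb} y * ennreal (\<bar>x - y\<bar> powr q) \<partial>M)
     \<le> indicator (- II) x * ennreal (\<bar>x - qm\<bar> powr q)"
    proof (cases "x < qa")
      case True
      then have "x \<notin> II" "\<not> qb < x" using am mb unfolding II_def by auto
      then show ?thesis using True L[OF True] L2 mult_left_mono[OF L[OF True], of "ennreal cc"]
        by (simp add: indicator_def)
    next
      case False
      show ?thesis
      proof (cases "qb < x")
        case True
        then have "x \<notin> II" using am mb unfolding II_def by auto
        then show ?thesis using True False R2 mult_left_mono[OF R[OF True], of "ennreal cc"]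
          by (simp add: indicator_def)
      next
        case F2: False
        then have "x \<in> II" using False unfolding II_def by auto
        then show ?thesis using False F2 by (simp add: indicator_def)
      qed
    qed
  qed
  finally show ?thesis .
qed


lemma Ieps_eq: "Ieps M e = II" unfolding Ieps_def II_def qa_def qb_def ..
lemma diam_eq: "diameter (Ieps M e) = qb - qa" using am mb unfolding Ieps_eq II_def by simp
lemma diam_II: "diameter II = qb - qa" using diam_eq unfolding Ieps_eq .
lemma qm_eq: "quantile M (1/2) = qm" unfolding qm_def ..

lemma E_compl: "emeasure M (- II) = ennreal (2 * e)"
proof -
  have "- II = {..<qa} \<union> {qb<..}" unfolding II_def by auto
  moreover have "{..<qa} \<inter> {qb<..} = {}" using am mb by auto
  ultimately have "emeasure M (- II) = emeasure M {..<qa} + emeasure M {qb<..}"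
    by (simp add: plus_emeasure)
  then show ?thesis using E_left E_right e0 by (simp add: ennreal_plus[symmetric])
qed

definition "RR r = (\<integral>\<^sup>+ x. indicator (- II) x * ennreal (\<bar>x - qm\<bar> powr r) \<partial>M)"

lemma tail_left: "r \<ge> 0 \<Longrightarrow> ennreal (e * (qm - qa) powr r) \<le> RR r"
proof -
  assume r: "r \<ge> 0"
  have "ennreal (e * (qm - qa) powr r) = (\<integral>\<^sup>+ x. ennreal ((qm - qa) powr r) * indicator {..<qa} x \<partial>M)"
  proof -
    have "(\<integral>\<^sup>+ x. ennreal ((qm - qa) powr r) * indicator {..<qa} x \<partial>M) = ennreal ((qm - qa) powr r) * emeasure M {..<qa}"
      by (rule nn_integral_cmult_indicator) simp
    moreover have "ennreal (e * (qm - qa) powr r) = ennreal e * ennreal ((qm - qa) powr r)"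
      using e0 by (intro ennreal_mult) auto
    ultimately show ?thesis using E_left by (simp add: mult.commute)
  qed
  also have "\<dots> \<le> RR r" unfolding RR_def
  proof (intro nn_integral_mono)
    fix x show "ennreal ((qm - qa) powr r) * indicator {..<qa} x \<le> indicator (- II) x * ennreal (\<bar>x - qm\<bar> powr r)"
    proof (cases "x < qa")
      case True
      then have "x \<notin> II" "(qm - qa) powr r \<le> \<bar>x - qm\<bar> powr r"
        using am r unfolding II_def by (auto intro!: powr_mono2)
      then show ?thesis using True by (simp add: indicator_def)
    qed simp
  qed
  finally show ?thesis .
qed

lemma tail_right: "r \<ge> 0 \<Longrightarrow> ennreal (e * (qb - qm) powr r) \<le> RR r"
proof -
  assume r: "r \<ge> 0"
  have "ennreal (e * (qb - qm) powr r) = (\<integral>\<^sup>+ x. ennreal ((qb - qm) powr r) * indicator {qb<..} x \<partial>M)"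
  proof -
    have "(\<integral>\<^sup>+ x. ennreal ((qb - qm) powr r) * indicator {qb<..} x \<partial>M) = ennreal ((qb - qm) powr r) * emeasure M {qb<..}"
      by (rule nn_integral_cmult_indicator) simp
    moreover have "ennreal (e * (qb - qm) powr r) = ennreal e * ennreal ((qb - qm) powr r)"
      using e0 by (intro ennreal_mult) auto
    ultimately show ?thesis using E_right by (simp add: mult.commute)
  qed
  also have "\<dots> \<le> RR r" unfolding RR_def
  proof (intro nn_integral_mono)
    fix x show "ennreal ((qb - qm) powr r) * indicator {qb<..} x \<le> indicator (- II) x * ennreal (\<bar>x - qm\<bar> powr r)"
    proof (cases "qb < x")
      case True
      then have "x \<notin> II" "(qb - qm) powr r \<le> \<bar>x - qm\<bar> powr r"
        using mb r unfolding II_def by (auto intro!: powr_mono2)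
      then show ?thesis using True by (simp add: indicator_def)
    qed simp
  qed
  finally show ?thesis .
qed

lemma RR_eq:
  assumes p: "p \<ge> 1" and int: "integrable M (\<lambda>x. \<bar>x\<bar> powr p)"
  shows "RR p = ennreal (LINT x:(- II)|M. \<bar>x - qm\<bar> powr p)"
proof -
  have bnd: "\<bar>x - qm\<bar> powr p \<le> 2 powr p * (\<bar>x\<bar> powr p + \<bar>qm\<bar> powr p)" for x
  proof -
    define Mx where "Mx = max \<bar>x\<bar> \<bar>qm\<bar>"
    have "\<bar>x - qm\<bar> \<le> 2 * Mx" unfolding Mx_def by auto
    then have "\<bar>x - qm\<bar> powr p \<le> (2 * Mx) powr p" using p by (intro powr_mono2) auto
    also have "\<dots> = 2 powr p * Mx powr p" unfolding Mx_def by (simp add: powr_mult)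
    also have "Mx powr p \<le> \<bar>x\<bar> powr p + \<bar>qm\<bar> powr p" unfolding Mx_def by (auto simp: max_def)
    finally show ?thesis by simp
  qed
  have intm: "integrable M (\<lambda>x. \<bar>x - qm\<bar> powr p)"
  proof (rule Bochner_Integration.integrable_bound[where f="\<lambda>x. 2 powr p * (\<bar>x\<bar> powr p + \<bar>qm\<bar> powr p)"])
    show "integrable M (\<lambda>x. 2 powr p * (\<bar>x\<bar> powr p + \<bar>qm\<bar> powr p))" using int by simp
    show "(\<lambda>x. \<bar>x - qm\<bar> powr p) \<in> borel_measurable M" by measurable
    show "AE x in M. norm (\<bar>x - qm\<bar> powr p) \<le> norm (2 powr p * (\<bar>x\<bar> powr p + \<bar>qm\<bar> powr p))"
      using bnd by (auto intro!: AE_I2 order_trans[OF _ abs_ge_self])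
  qed
  have "RR p = (\<integral>\<^sup>+ x. ennreal (indicator (- II) x *\<^sub>R \<bar>x - qm\<bar> powr p) \<partial>M)"
    unfolding RR_def by (intro nn_integral_cong) (simp add: indicator_def)
  also have "\<dots> = ennreal (\<integral>x. indicator (- II) x *\<^sub>R \<bar>x - qm\<bar> powr p \<partial>M)"
  proof (rule nn_integral_eq_integral)
    show "integrable M (\<lambda>x. indicator (- II) x *\<^sub>R \<bar>x - qm\<bar> powr p)"
      by (rule integrable_mult_indicator[OF _ intm]) simp
  qed simp
  finally show ?thesis unfolding set_lebesgue_integral_def .
qed


lemma W_powr: "q \<noteq> 0 \<Longrightarrow> Wasserstein q M (trim e M) powr q = enn2real (wass_cost q M (trim e M))"
  unfolding Wasserstein_def by (simp add: powr_powr)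

lemma L_nonneg: "0 \<le> (LINT x:(- II)|M. \<bar>x - qm\<bar> powr p)"
  unfolding set_lebesgue_integral_def by (rule Bochner_Integration.integral_nonneg) (simp add: indicator_def)

lemma pt_ineq:
  assumes "D \<ge> 0" "t \<ge> 0" "1 \<le> q" "q \<le> p"
  shows "rpow D (p - q) * t powr q \<le> D powr p + t powr p"
proof (cases "p = q")
  case True then show ?thesis by (simp add: rpow_def)
next
  case False
  define Mx where "Mx = max D t"
  have "D powr (p - q) \<le> Mx powr (p - q)" using assms unfolding Mx_def by (intro powr_mono2) auto
  moreover have "t powr q \<le> Mx powr q" using assms unfolding Mx_def by (intro powr_mono2) auto
  ultimately have "D powr (p - q) * t powr q \<le> Mx powr (p - q) * Mx powr q"
    by (intro mult_mono) auto
  also have "\<dots> = Mx powr p" by (simp add: powr_add[symmetric])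
  also have "\<dots> \<le> D powr p + t powr p" unfolding Mx_def by (auto simp: max_def)
  finally show ?thesis using False by (simp add: rpow_def)
qed

lemma final1:
  assumes q: "1 \<le> q" "q \<le> p" and int: "integrable M (\<lambda>x. \<bar>x\<bar> powr p)"
  shows "rpow (diameter (Ieps M e)) (p - q) * Wasserstein q M (trim e M) powr q
     \<le> (2 powr (p+1) + 1) * (LINT x:(- Ieps M e)|M. \<bar>x - quantile M (1/2)\<bar> powr p)"
proof -
  define L where "L = (LINT x:(- II)|M. \<bar>x - qm\<bar> powr p)"
  define D where "D = qb - qa"
  define W where "W = wass_cost q M (trim e M)"
  define rp where "rp = rpow D (p - q)"
  have p1: "p \<ge> 1" using q by simp
  have L0: "L \<ge> 0" unfolding L_def by (rule L_nonneg)
  have RRp: "RR p = ennreal L" unfolding L_def by (rule RR_eq[OF p1 int])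
  have D0: "D \<ge> 0" unfolding D_def using am mb by simp
  have rp0: "rp \<ge> 0" unfolding rp_def rpow_def by simp
  have A: "ennreal rp * RR q \<le> ennreal (D powr p * (2 * e)) + RR p"
  proof -
    have "ennreal rp * RR q = (\<integral>\<^sup>+ x. ennreal rp * (indicator (- II) x * ennreal (\<bar>x - qm\<bar> powr q)) \<partial>M)"
      unfolding RR_def by (rule nn_integral_cmult[symmetric]) simp
    also have "\<dots> \<le> (\<integral>\<^sup>+ x. ennreal (D powr p) * indicator (- II) x + indicator (- II) x * ennreal (\<bar>x - qm\<bar> powr p) \<partial>M)"
    proof (intro nn_integral_mono)
      fix x
      have "rp * \<bar>x - qm\<bar> powr q \<le> D powr p + \<bar>x - qm\<bar> powr p"
        unfolding rp_def using pt_ineq[OF D0 _ q] by simp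
      then have "ennreal (rp * \<bar>x - qm\<bar> powr q) \<le> ennreal (D powr p) + ennreal (\<bar>x - qm\<bar> powr p)"
      proof -
        have "ennreal (D powr p) + ennreal (\<bar>x - qm\<bar> powr p) = ennreal (D powr p + \<bar>x - qm\<bar> powr p)"
          by (rule ennreal_plus[symmetric]) auto
        show ?thesis unfolding \<open>ennreal (D powr p) + _ = _\<close> by (rule ennreal_leI) fact
      qed
      then show "ennreal rp * (indicator (- II) x * ennreal (\<bar>x - qm\<bar> powr q))
          \<le> ennreal (D powr p) * indicator (- II) x + indicator (- II) x * ennreal (\<bar>x - qm\<bar> powr p)"
      proof (cases "x \<in> - II")
        case True
        have "ennreal rp * ennreal (\<bar>x - qm\<bar> powr q) = ennreal (rp * \<bar>x - qm\<bar> powr q)"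
          using rp0 by (rule ennreal_mult[symmetric]) simp
        then show ?thesis using True \<open>ennreal (rp * \<bar>x - qm\<bar> powr q) \<le> _\<close> by simp
      qed simp
    qed
    also have "\<dots> = ennreal (D powr p) * emeasure M (- II) + RR p"
      unfolding RR_def by (simp add: nn_integral_add nn_integral_cmult_indicator)
    also have "\<dots> = ennreal (D powr p * (2 * e)) + RR p"
      using E_compl e0 by (simp add: ennreal_mult)
    finally show ?thesis .
  qed
  have B: "D powr p * (2 * e) \<le> 2 powr (p + 1) * L"
  proof -
    define Mx where "Mx = max (qm - qa) (qb - qm)"
    have t1: "e * (qm - qa) powr p \<le> L" using tail_left[of p] p1 RRp L0 by simp
    have t2: "e * (qb - qm) powr p \<le> L" using tail_right[of p] p1 RRp L0 by simp
    have tM: "e * Mx powr p \<le> L" using t1 t2 unfolding Mx_def by (cases "qm - qa \<le> qb - qm") (simp_all add: max_def)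
    have "D \<le> 2 * Mx" unfolding D_def Mx_def by (auto simp: max_def)
    then have "D powr p \<le> (2 * Mx) powr p" using D0 p1 by (intro powr_mono2) auto
    also have "\<dots> = 2 powr p * Mx powr p" using am mb unfolding Mx_def by (simp add: powr_mult)
    finally have "D powr p * (2 * e) \<le> 2 powr p * Mx powr p * (2 * e)" using e0 by (intro mult_right_mono) auto
    also have "\<dots> = 2 powr p * 2 * (e * Mx powr p)" by simp
    also have "\<dots> \<le> 2 powr p * 2 * L" using tM by (intro mult_left_mono) auto
    also have "\<dots> = 2 powr (p + 1) * L" by (simp add: powr_add)
    finally show ?thesis .
  qed
  have W1: "W \<le> RR q" unfolding W_def RR_def using cost_le q by simp
  have "ennreal (rp * enn2real W) = ennreal rp * ennreal (enn2real W)" using rp0 by (simp add: ennreal_mult)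
  also have "\<dots> \<le> ennreal rp * W" by (intro mult_left_mono) (auto simp: ennreal_enn2real_if)
  also have "\<dots> \<le> ennreal rp * RR q" by (intro mult_left_mono W1) simp
  also have "\<dots> \<le> ennreal (D powr p * (2 * e)) + ennreal L" using A RRp by simp
  also have "\<dots> = ennreal (D powr p * (2 * e) + L)" using e0 L0 by (simp add: ennreal_plus)
  also have "\<dots> \<le> ennreal ((2 powr (p+1) + 1) * L)" using B by (intro ennreal_leI) (simp add: distrib_right)
  finally have "rp * enn2real W \<le> (2 powr (p+1) + 1) * L" using L0 by (subst (asm) ennreal_le_iff) auto
  then show ?thesis using q
    unfolding rp_def W_def D_def L_def Ieps_eq qm_eq by (simp add: W_powr diam_II)
qed

lemma final2:
  assumes p1: "1 \<le> p" and int: "integrable M (\<lambda>x. \<bar>x\<bar> powr p)"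
  shows "Wasserstein p M (trim e M) powr p \<le> (LINT x:(- Ieps M e)|M. \<bar>x - quantile M (1/2)\<bar> powr p)"
proof -
  define L where "L = (LINT x:(- II)|M. \<bar>x - qm\<bar> powr p)"
  have L0: "L \<ge> 0" unfolding L_def by (rule L_nonneg)
  have RRp: "RR p = ennreal L" unfolding L_def by (rule RR_eq[OF p1 int])
  have "wass_cost p M (trim e M) \<le> RR p" unfolding RR_def using cost_le p1 by simp
  then have "enn2real (wass_cost p M (trim e M)) \<le> enn2real (RR p)"
    by (rule enn2real_mono) (simp add: RRp)
  then show ?thesis using p1 L0 unfolding Ieps_eq qm_eq RRp L_def by (simp add: W_powr)
qed

end


lemma tctx_intro:
  assumes "\<mu> \<in> Pp p" "atomless \<mu>" "0 < \<epsilon>" "\<epsilon> < 1/2"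
  shows "tctx \<mu> \<epsilon>" and "integrable \<mu> (\<lambda>x. \<bar>x\<bar> powr p)"
proof -
  have ps: "prob_space \<mu>" and se: "sets \<mu> = sets borel" and int: "integrable \<mu> (\<lambda>x. \<bar>x\<bar> powr p)"
    using assms(1) unfolding Pp_def by auto
  interpret real_distribution \<mu> using ps se by (simp add: real_distribution_def real_distribution_axioms_def)
  show "tctx \<mu> \<epsilon>"
    using assms(2-4) unfolding atomless_def
    by unfold_locales (auto simp: measure_def)
  show "integrable \<mu> (\<lambda>x. \<bar>x\<bar> powr p)" by (rule int)
qed

theorem lemma4p6:
  fixes p :: real
  assumes "p \<ge> 1"
  shows "(\<exists>C>0. \<forall>\<mu> \<epsilon> q. \<mu> \<in> Pp p \<longrightarrow> atomless \<mu> \<longrightarrow> 0 < \<epsilon> \<longrightarrow> \<epsilon> < 1/2 \<longrightarrow>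
            1 \<le> q \<longrightarrow> q \<le> p \<longrightarrow>
            rpow (diameter (Ieps \<mu> \<epsilon>)) (p - q) * Wasserstein q \<mu> (trim \<epsilon> \<mu>) powr q
              \<le> C * (LINT x:(- Ieps \<mu> \<epsilon>)|\<mu>. \<bar>x - quantile \<mu> (1/2)\<bar> powr p))
       \<and> (\<forall>\<mu> \<epsilon>. \<mu> \<in> Pp p \<longrightarrow> atomless \<mu> \<longrightarrow> 0 < \<epsilon> \<longrightarrow> \<epsilon> < 1/2 \<longrightarrow>
            Wasserstein p \<mu> (trim \<epsilon> \<mu>) powr p
              \<le> (LINT x:(- Ieps \<mu> \<epsilon>)|\<mu>. \<bar>x - quantile \<mu> (1/2)\<bar> powr p))"
proof (intro conjI exI[of _ "2 powr (p+1) + 1"] allI impI)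
  show "0 < 2 powr (p + 1) + (1::real)" by (simp add: add_pos_pos)
next
  fix \<mu> :: "real measure" and \<epsilon> q :: real
  assume h: "\<mu> \<in> Pp p" "atomless \<mu>" "0 < \<epsilon>" "\<epsilon> < 1/2" "1 \<le> q" "q \<le> p"
  interpret tctx \<mu> \<epsilon> using tctx_intro(1)[OF h(1-4)] .
  show "rpow (diameter (Ieps \<mu> \<epsilon>)) (p - q) * Wasserstein q \<mu> (trim \<epsilon> \<mu>) powr q
              \<le> (2 powr (p+1) + 1) * (LINT x:(- Ieps \<mu> \<epsilon>)|\<mu>. \<bar>x - quantile \<mu> (1/2)\<bar> powr p)"
    by (rule final1[OF h(5,6) tctx_intro(2)[OF h(1-4)]])
next
  fix \<mu> :: "real measure" and \<epsilon> :: real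
  assume h: "\<mu> \<in> Pp p" "atomless \<mu>" "0 < \<epsilon>" "\<epsilon> < 1/2"
  interpret tctx \<mu> \<epsilon> using tctx_intro(1)[OF h(1-4)] .
  show "Wasserstein p \<mu> (trim \<epsilon> \<mu>) powr p
              \<le> (LINT x:(- Ieps \<mu> \<epsilon>)|\<mu>. \<bar>x - quantile \<mu> (1/2)\<bar> powr p)"
    by (rule final2[OF assms tctx_intro(2)[OF h(1-4)]])
qed

end
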